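(* Fix $n\ge 2$ and a positive integer $m_0$, and let $(\lambda^{(m)})_{m\ge m_0}$ be a sequence with $\lambda^{(m)}\in\mathbb{R}^{mn}$. Set $H^{(m)}=U(m)\,\mathrm{diag}(\lambda^{(m)})\,U(m)^\dagger$, where $U(m)$ is an $mn\times mn$ Haar-distributed unitary. Suppose that the measures $\mu[\lambda^{(m)}]$ all have support in some bounded interval $[-K,K]$, satisfy a uniform bound $|M_r(\mu[\lambda^{(m)}])|<C$ for all $r$ and $m$, and converge weakly to a probability measure $\mu$. Then, as $m\to\infty$, the random $n\times n$ matrix $\pi_2(m^{-1}H^{(m)})$ converges in probability to $M_1(\mu)I_n$, where $I_n$ is the $n\times n$ identity matrix.
   Context: For $mn\times mn$ matrices with rows/columns indexed lexicographically by double indices $ij$ ($1\le i\le m$, $1\le j\le n$), $\pi_2(H)_{j,l}=\sum_{i=1}^mH_{ij,il}$. The empirical spectral measure of $\lambda\in\mathbb{R}^{mn}$ is $\mu[\lambda]=\frac{1}{mn}\sum_{ij}\delta_{\lambda_{ij}}$ (Dirac masses). $M_r(\nu)=\int x^r\,d\nu(x)$. *)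

theory Defs
  imports "HOL-Probability.Probability"
begin

text \<open>Square N x N complex matrices are represented as functions
  nat => nat => complex whose entries vanish outside {..<N} x {..<N}
  (0-based indices). The function type carries the product topology,
  hence a Borel sigma algebra.\<close>

definition cmat :: "nat \<Rightarrow> (nat \<Rightarrow> nat \<Rightarrow> complex) \<Rightarrow> bool" where
  "cmat N A \<longleftrightarrow> (\<forall>i j. (N \<le> i \<or> N \<le> j) \<longrightarrow> A i j = 0)"

definition cmat_mult :: "nat \<Rightarrow> (nat \<Rightarrow> nat \<Rightarrow> complex) \<Rightarrow> (nat \<Rightarrow> nat \<Rightarrow> complex)
    \<Rightarrow> (nat \<Rightarrow> nat \<Rightarrow> complex)" where
  "cmat_mult N A B = (\<lambda>i j. if i < N \<and> j < N then (\<Sum>k<N. A i k * B k j) else 0)"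

definition unitary_cmat :: "nat \<Rightarrow> (nat \<Rightarrow> nat \<Rightarrow> complex) \<Rightarrow> bool" where
  "unitary_cmat N U \<longleftrightarrow> cmat N U \<and>
     (\<forall>i<N. \<forall>j<N. (\<Sum>k<N. cnj (U k i) * U k j) = (if i = j then 1 else 0))"

definition haar_unitary :: "nat \<Rightarrow> (nat \<Rightarrow> nat \<Rightarrow> complex) measure \<Rightarrow> bool" where
  "haar_unitary N Q \<longleftrightarrow> prob_space Q \<and> sets Q = sets borel \<and>
     (AE U in Q. unitary_cmat N U) \<and>
     (\<forall>V. unitary_cmat N V \<longrightarrow> distr Q borel (\<lambda>U. cmat_mult N V U) = Q)"

definition conj_diag :: "nat \<Rightarrow> (nat \<Rightarrow> nat \<Rightarrow> complex) \<Rightarrow> (nat \<Rightarrow> real)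
    \<Rightarrow> (nat \<Rightarrow> nat \<Rightarrow> complex)" where
  "conj_diag N U lam = (\<lambda>i k. if i < N \<and> k < N
      then (\<Sum>p<N. U i p * complex_of_real (lam p) * cnj (U k p)) else 0)"

text \<open>Partial trace pi_2 for an (m n) x (m n) matrix, double index ij
  (0-based i<m, j<n) corresponding to the linear index i*n+j.\<close>

definition pi2 :: "nat \<Rightarrow> nat \<Rightarrow> (nat \<Rightarrow> nat \<Rightarrow> complex) \<Rightarrow> (nat \<Rightarrow> nat \<Rightarrow> complex)" where
  "pi2 m n H = (\<lambda>j l. if j < n \<and> l < n then (\<Sum>i<m. H (i*n+j) (i*n+l)) else 0)"

definition emp_measure :: "nat \<Rightarrow> (nat \<Rightarrow> real) \<Rightarrow> real measure" where
  "emp_measure N lam = measure_pmf (map_pmf lam (pmf_of_set {..<N}))"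

definition moment :: "real measure \<Rightarrow> nat \<Rightarrow> real" where
  "moment \<nu> r = (\<integral>x. x ^ r \<partial>\<nu>)"

end

theory Submission
  imports Defs
begin

lemma meas_entry[measurable]: "(\<lambda>U::nat\<Rightarrow>nat\<Rightarrow>complex. U i p) \<in> borel_measurable borel"
proof -
  have "(\<lambda>U::nat\<Rightarrow>nat\<Rightarrow>complex. U i p) = (\<lambda>f. f p) \<circ> (\<lambda>U. U i)" by auto
  then show ?thesis
    by (metis measurable_comp measurable_product_coordinates)
qed

lemma cmod_sq_complex: "complex_of_real (cmod z ^ 2) = cnj z * z"
  by (metis complex_norm_square mult.commute)

lemma unit_col:
  assumes "unitary_cmat N U" "p < N"
  shows "(\<Sum>k<N. cmod (U k p) ^ 2) = 1"
proof -
  have "(\<Sum>k<N. cnj (U k p) * U k p) = 1" using assms unfolding unitary_cmat_def by auto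
  moreover have "complex_of_real (\<Sum>k<N. cmod (U k p) ^ 2) = (\<Sum>k<N. cnj (U k p) * U k p)"
    by (simp only: of_real_sum cmod_sq_complex)
  ultimately have "complex_of_real (\<Sum>k<N. cmod (U k p) ^ 2) = 1" by simp
  then show ?thesis using of_real_eq_1_iff by blast
qed

lemma entry_le1:
  assumes "unitary_cmat N U"
  shows "cmod (U a p) \<le> 1"
proof (cases "a < N \<and> p < N")
  case True
  have "cmod (U a p) ^ 2 \<le> (\<Sum>k<N. cmod (U k p) ^ 2)"
    by (rule member_le_sum) (use True in auto)
  then have "cmod (U a p) ^ 2 \<le> 1" using unit_col[OF assms] True by simp
  then show ?thesis by (simp add: power_le_one_iff)
next
  case False
  then have "U a p = 0" using assms unfolding unitary_cmat_def cmat_def by auto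
  then show ?thesis by simp
qed

lemma H_bound:
  assumes "unitary_cmat N U" "\<forall>p<N. \<bar>lam p\<bar> \<le> K"
  shows "cmod (conj_diag N U lam a b) \<le> N * K"
proof -
  have "cmod (\<Sum>p<N. U a p * complex_of_real (lam p) * cnj (U b p)) \<le> (\<Sum>p<N. cmod (U a p * complex_of_real (lam p) * cnj (U b p)))"
    by (rule norm_sum)
  also have "\<dots> \<le> (\<Sum>p<N. K)"
  proof (rule sum_mono)
    fix p assume p: "p \<in> {..<N}"
    have "cmod (U a p * complex_of_real (lam p) * cnj (U b p)) = cmod (U a p) * \<bar>lam p\<bar> * cmod (U b p)"
      by (simp add: norm_mult)
    also have "\<dots> \<le> 1 * K * 1"
      using entry_le1[OF assms(1)] assms(2) p
      by (intro mult_mono) (auto)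
    finally show "cmod (U a p * complex_of_real (lam p) * cnj (U b p)) \<le> K" by simp
  qed
  finally have *: "cmod (\<Sum>p<N. U a p * complex_of_real (lam p) * cnj (U b p)) \<le> N * K" by simp
  have "0 \<le> N * K" using * by (meson norm_ge_zero order_trans)
  then show ?thesis using * unfolding conj_diag_def by auto
qed

lemma diag_real: "Im (conj_diag N U lam a a) = 0"
  unfolding conj_diag_def by (simp add: Im_sum)

lemma diag_Re: "a < N \<Longrightarrow> Re (conj_diag N U lam a a) = (\<Sum>p<N. lam p * cmod (U a p) ^ 2)"
  unfolding conj_diag_def
  by (auto intro!: sum.cong simp: cmod_power2 | simp add: algebra_simps power2_eq_square)+

lemma trace_H:
  assumes "unitary_cmat N U"
  shows "(\<Sum>a<N. Re (conj_diag N U lam a a)) = (\<Sum>p<N. lam p)"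
proof -
  have "(\<Sum>a<N. Re (conj_diag N U lam a a)) = (\<Sum>a<N. \<Sum>p<N. lam p * cmod (U a p) ^ 2)"
    by (simp add: diag_Re)
  also have "\<dots> = (\<Sum>p<N. lam p * (\<Sum>a<N. cmod (U a p) ^ 2))"
    by (subst sum.swap) (simp add: sum_distrib_left)
  also have "\<dots> = (\<Sum>p<N. lam p)"
    using unit_col[OF assms] by simp
  finally show ?thesis .
qed

lemma frob:
  assumes "unitary_cmat N U"
  shows "(\<Sum>a<N. \<Sum>b<N. cmod (conj_diag N U lam a b) ^ 2) = (\<Sum>p<N. lam p ^ 2)"
proof -
  define L where "L p = complex_of_real (lam p)" for p
  have orth: "\<And>i j. i < N \<Longrightarrow> j < N \<Longrightarrow> (\<Sum>k<N. cnj (U k i) * U k j) = (if i = j then 1 else 0)"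
    using assms unfolding unitary_cmat_def by auto
  have "complex_of_real (\<Sum>a<N. \<Sum>b<N. cmod (conj_diag N U lam a b) ^ 2)
      = (\<Sum>a<N. \<Sum>b<N. cnj (conj_diag N U lam a b) * conj_diag N U lam a b)"
    by (simp only: of_real_sum cmod_sq_complex)
  also have "\<dots> = (\<Sum>a<N. \<Sum>b<N. (\<Sum>q<N. cnj (U a q) * L q * U b q) * (\<Sum>p<N. U a p * L p * cnj (U b p)))"
    by (intro sum.cong refl) (simp add: conj_diag_def L_def cnj_sum)
  also have "\<dots> = (\<Sum>a<N. \<Sum>b<N. \<Sum>q<N. \<Sum>p<N. L p * L q * (cnj (U a q) * U a p) * (cnj (U b p) * U b q))"
    by (simp add: sum_product sum_distrib_left sum_distrib_right algebra_simps)
  also have "\<dots> = (\<Sum>a<N. \<Sum>q<N. \<Sum>b<N. \<Sum>p<N. L p * L q * (cnj (U a q) * U a p) * (cnj (U b p) * U b q))"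
    by (rule sum.cong[OF refl], rule sum.swap)
  also have "\<dots> = (\<Sum>a<N. \<Sum>q<N. \<Sum>p<N. \<Sum>b<N. L p * L q * (cnj (U a q) * U a p) * (cnj (U b p) * U b q))"
    by (rule sum.cong[OF refl], rule sum.cong[OF refl], rule sum.swap)
  also have "\<dots> = (\<Sum>q<N. \<Sum>a<N. \<Sum>p<N. \<Sum>b<N. L p * L q * (cnj (U a q) * U a p) * (cnj (U b p) * U b q))"
    by (rule sum.swap)
  also have "\<dots> = (\<Sum>q<N. \<Sum>p<N. \<Sum>a<N. \<Sum>b<N. L p * L q * (cnj (U a q) * U a p) * (cnj (U b p) * U b q))"
    by (rule sum.cong[OF refl], rule sum.swap)
  also have "\<dots> = (\<Sum>p<N. \<Sum>q<N. \<Sum>a<N. \<Sum>b<N. L p * L q * (cnj (U a q) * U a p) * (cnj (U b p) * U b q))"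
    by (rule sum.swap)
  also have "\<dots> = (\<Sum>p<N. \<Sum>q<N. L p * L q * (\<Sum>a<N. cnj (U a q) * U a p) * (\<Sum>b<N. cnj (U b p) * U b q))"
    by (simp add: sum_distrib_left sum_distrib_right algebra_simps)
  also have "\<dots> = (\<Sum>p<N. \<Sum>q<N. if p = q then L p * L q else 0)"
    by (intro sum.cong refl) (simp add: orth)
  also have "\<dots> = (\<Sum>p<N. L p * L p)"
    by simp
  also have "\<dots> = complex_of_real (\<Sum>p<N. lam p ^ 2)"
    by (simp add: L_def power2_eq_square)
  finally show ?thesis using of_real_eq_iff by blast
qed


definition sgnm :: "nat \<Rightarrow> nat \<Rightarrow> nat \<Rightarrow> nat \<Rightarrow> complex" where
  "sgnm N a = (\<lambda>x y. if x < N \<and> y < N \<and> x = y then (if x = a then -1 else 1) else 0)"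

lemma unitary_sgnm: "unitary_cmat N (sgnm N a)"
  unfolding unitary_cmat_def
proof (intro conjI allI impI)
  show "cmat N (sgnm N a)" unfolding cmat_def sgnm_def by auto
  fix i j assume ij: "i < N" "j < N"
  have "(\<Sum>k<N. cnj (sgnm N a k i) * sgnm N a k j) = (\<Sum>k<N. if k = i then (if i = j then 1 else 0) else 0)"
    by (intro sum.cong refl) (auto simp: sgnm_def)
  also have "\<dots> = (if i = j then 1 else 0)" using ij by simp
  finally show "(\<Sum>k<N. cnj (sgnm N a k i) * sgnm N a k j) = (if i = j then 1 else 0)" .
qed

lemma mult_sgnm:
  "cmat_mult N (sgnm N a) U = (\<lambda>x p. if x < N \<and> p < N then (if x = a then -1 else 1) * U x p else 0)"
proof (intro ext)
  fix x p
  show "cmat_mult N (sgnm N a) U x p = (if x < N \<and> p < N then (if x = a then -1 else 1) * U x p else 0)"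
  proof (cases "x < N \<and> p < N")
    case True
    have "(\<Sum>k<N. sgnm N a x k * U k p) = (\<Sum>k<N. if k = x then (if x = a then -1 else 1) * U x p else 0)"
      by (intro sum.cong refl) (auto simp: sgnm_def)
    also have "\<dots> = (if x = a then -1 else 1) * U x p" using True by simp
    finally show ?thesis using True unfolding cmat_mult_def by simp
  qed (auto simp: cmat_mult_def)
qed

lemma conj_sgnm:
  assumes "x < N" "y < N"
  shows "conj_diag N (cmat_mult N (sgnm N a) U) lam x y
     = (if x = a then -1 else 1) * (if y = a then -1 else 1) * conj_diag N U lam x y"
  using assms unfolding conj_diag_def mult_sgnm
  by (auto simp: sum_distrib_left algebra_simps intro!: sum.cong)

definition permm :: "nat \<Rightarrow> (nat \<Rightarrow> nat) \<Rightarrow> nat \<Rightarrow> nat \<Rightarrow> complex" where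
  "permm N s = (\<lambda>x y. if x < N \<and> y < N \<and> y = s x then 1 else 0)"

lemma unitary_permm:
  assumes bij: "bij_betw s {..<N} {..<N}"
  shows "unitary_cmat N (permm N s)"
  unfolding unitary_cmat_def
proof (intro conjI allI impI)
  show "cmat N (permm N s)" unfolding cmat_def permm_def by auto
  fix i j assume ij: "i < N" "j < N"
  have "(\<Sum>k<N. cnj (permm N s k i) * permm N s k j) = (\<Sum>k<N. (\<lambda>y. if y = i \<and> y = j then 1 else 0) (s k))"
    using ij by (intro sum.cong refl) (auto simp: permm_def)
  also have "\<dots> = (\<Sum>y<N. if y = i \<and> y = j then 1 else 0)"
    by (rule sum.reindex_bij_betw[OF bij])
  also have "\<dots> = (\<Sum>y<N. if y = i then (if i = j then 1 else 0) else 0)"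
    by (intro sum.cong refl) auto
  also have "\<dots> = (if i = j then 1 else 0)" using ij by simp
  finally show "(\<Sum>k<N. cnj (permm N s k i) * permm N s k j) = (if i = j then 1 else 0)" .
qed

lemma mult_permm:
  assumes bij: "bij_betw s {..<N} {..<N}"
  shows "cmat_mult N (permm N s) U = (\<lambda>x p. if x < N \<and> p < N then U (s x) p else 0)"
proof (intro ext)
  fix x p
  show "cmat_mult N (permm N s) U x p = (if x < N \<and> p < N then U (s x) p else 0)"
  proof (cases "x < N \<and> p < N")
    case True
    then have sx: "s x < N" using bij by (auto simp: bij_betw_def)
    have "(\<Sum>k<N. permm N s x k * U k p) = (\<Sum>k<N. if k = s x then U (s x) p else 0)"
      using True by (intro sum.cong refl) (auto simp: permm_def)
    also have "\<dots> = U (s x) p" using sx by simp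
    finally show ?thesis using True unfolding cmat_mult_def by simp
  qed (auto simp: cmat_mult_def)
qed

lemma conj_permm:
  assumes bij: "bij_betw s {..<N} {..<N}" and "x < N" "y < N"
  shows "conj_diag N (cmat_mult N (permm N s) U) lam x y = conj_diag N U lam (s x) (s y)"
proof -
  have "s x < N" "s y < N" using assms by (auto simp: bij_betw_def)
  then show ?thesis using assms unfolding conj_diag_def mult_permm[OF bij]
    by (auto intro!: sum.cong)
qed

definition sw :: "nat \<Rightarrow> nat \<Rightarrow> nat \<Rightarrow> nat" where
  "sw a b x = (if x = a then b else if x = b then a else x)"

lemma bij_sw: "a < N \<Longrightarrow> b < N \<Longrightarrow> bij_betw (sw a b) {..<N} {..<N}"
  by (rule bij_betw_byWitness[where f' = "sw a b"]) (auto simp: sw_def)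

lemma cmat_mult_meas: "cmat_mult N V \<in> borel_measurable borel"
proof (rule measurable_coordinatewise_then_product)
  fix i
  show "(\<lambda>x. cmat_mult N V x i) \<in> borel_measurable borel"
  proof (rule measurable_coordinatewise_then_product)
    fix j
    show "(\<lambda>x. cmat_mult N V x i j) \<in> borel_measurable borel"
      unfolding cmat_mult_def by measurable
  qed
qed

lemma meas_cnj_entry[measurable]: "(\<lambda>U::nat\<Rightarrow>nat\<Rightarrow>complex. cnj (U i p)) \<in> borel_measurable borel"
proof -
  have "(cnj :: complex \<Rightarrow> complex) \<in> borel_measurable borel"
    by (intro borel_measurable_continuous_onI continuous_intros)
  then show ?thesis by (rule measurable_compose[OF meas_entry])
qed

lemma cd_meas[measurable]: "(\<lambda>U. conj_diag N U lam a b) \<in> borel_measurable borel"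
proof (cases "a < N \<and> b < N")
  case True
  then have "(\<lambda>U. conj_diag N U lam a b) = (\<lambda>U. \<Sum>p<N. U a p * complex_of_real (lam p) * cnj (U b p))"
    by (auto simp: conj_diag_def)
  then show ?thesis by simp
next
  case False
  then show ?thesis by (simp add: conj_diag_def)
qed

lemma haar_inv:
  fixes g :: "(nat \<Rightarrow> nat \<Rightarrow> complex) \<Rightarrow> real"
  assumes haar: "haar_unitary N Q" and V: "unitary_cmat N V" and g: "g \<in> borel_measurable borel"
  shows "(\<integral>U. g U \<partial>Q) = (\<integral>U. g (cmat_mult N V U) \<partial>Q)"
proof -
  have eq: "distr Q borel (cmat_mult N V) = Q" and sQ: "sets Q = sets borel"
    using haar V unfolding haar_unitary_def by auto
  have m: "cmat_mult N V \<in> measurable Q borel"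
    using cmat_mult_meas measurable_cong_sets[OF sQ refl] by blast
  have "(\<integral>U. g U \<partial>Q) = integral\<^sup>L (distr Q borel (cmat_mult N V)) g" by (simp add: eq)
  also have "\<dots> = (\<integral>U. g (cmat_mult N V U) \<partial>Q)" by (rule integral_distr[OF m g])
  finally show ?thesis .
qed

lemma haar_AE: "haar_unitary N Q \<Longrightarrow> AE U in Q. unitary_cmat N U"
  unfolding haar_unitary_def by auto

lemma haar_meas:
  "haar_unitary N Q \<Longrightarrow> g \<in> borel_measurable borel \<Longrightarrow> g \<in> borel_measurable Q"
  unfolding haar_unitary_def using measurable_cong_sets by blast

lemma haar_intg:
  fixes g :: "(nat \<Rightarrow> nat \<Rightarrow> complex) \<Rightarrow> real"
  assumes haar: "haar_unitary N Q" and g: "g \<in> borel_measurable borel"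
    and B: "\<And>U. unitary_cmat N U \<Longrightarrow> \<bar>g U\<bar> \<le> B"
  shows "integrable Q g"
proof -
  interpret prob_space Q using haar unfolding haar_unitary_def by auto
  show ?thesis
  proof (rule integrable_const_bound[where B=B])
    show "AE x in Q. norm (g x) \<le> B" using haar_AE[OF haar] by eventually_elim (use B in auto)
    show "g \<in> borel_measurable Q" by (rule haar_meas[OF haar g])
  qed
qed


lemma cmod_sq_ri: "cmod w ^ 2 = Re w * Re w + Im w * Im w"
  by (metis cmod_power2 power2_eq_square)

lemma prod_bd:
  fixes x y B :: real
  assumes "\<bar>x\<bar> \<le> B" "\<bar>y\<bar> \<le> B"
  shows "\<bar>x * y\<bar> \<le> B * B"
proof -
  have "0 \<le> B" using assms(1) by linarith
  then show ?thesis using assms by (simp add: abs_mult mult_mono)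
qed

lemma int_sq_sum:
  fixes w :: "'i \<Rightarrow> 'a \<Rightarrow> real"
  assumes fin: "finite I" and intg: "\<And>i k. i \<in> I \<Longrightarrow> k \<in> I \<Longrightarrow> integrable M (\<lambda>x. w i x * w k x)"
  shows "integrable M (\<lambda>x. (\<Sum>i\<in>I. w i x) ^ 2)"
    and "(\<integral>x. (\<Sum>i\<in>I. w i x) ^ 2 \<partial>M) = (\<Sum>i\<in>I. \<Sum>k\<in>I. \<integral>x. w i x * w k x \<partial>M)"
proof -
  have eq: "(\<lambda>x. (\<Sum>i\<in>I. w i x) ^ 2) = (\<lambda>x. \<Sum>i\<in>I. \<Sum>k\<in>I. w i x * w k x)"
    by (simp add: power2_eq_square sum_product)
  show "integrable M (\<lambda>x. (\<Sum>i\<in>I. w i x) ^ 2)"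
    unfolding eq using intg by (auto intro!: integrable_sum)
  show "(\<integral>x. (\<Sum>i\<in>I. w i x) ^ 2 \<partial>M) = (\<Sum>i\<in>I. \<Sum>k\<in>I. \<integral>x. w i x * w k x \<partial>M)"
    unfolding eq using intg by (simp add: integral_sum integrable_sum)
qed

lemma sum_if_eq:
  fixes x g :: real
  assumes "finite I" "i \<in> I"
  shows "(\<Sum>k\<in>I. if k = i then x else g) = x + (real (card I) - 1) * g"
proof -
  have "(\<Sum>k\<in>I. if k = i then x else g) = x + (\<Sum>k\<in>I - {i}. if k = i then x else g)"
    using assms by (simp add: sum.remove)
  also have "(\<Sum>k\<in>I - {i}. if k = i then x else g) = (\<Sum>k\<in>I - {i}. g)"
    by (intro sum.cong) auto
  also have "\<dots> = (real (card I) - 1) * g"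
  proof -
    have "card I \<ge> 1" using assms by (metis One_nat_def Suc_leI card_gt_0_iff empty_iff)
    then show ?thesis using assms by (simp add: card_Diff_singleton of_nat_diff)
  qed
  finally show ?thesis .
qed

lemma idx_lt: "j < n \<Longrightarrow> i < m \<Longrightarrow> i * n + j < m * (n::nat)"
proof -
  assume a: "j < n" "i < m"
  have "(i + 1) * n \<le> m * n" using a by (intro mult_le_mono1) simp
  then show ?thesis using a by simp
qed

lemma idx_mod: "j < n \<Longrightarrow> (i * n + j) mod n = (j::nat)"
  by simp

lemma idx_inj: "j < n \<Longrightarrow> i * n + j = k * n + j \<Longrightarrow> i = (k::nat)"
  by simp

lemma pick_le2:
  fixes f :: "nat \<Rightarrow> nat \<Rightarrow> real"
  assumes f: "\<And>x y. 0 \<le> f x y" and jl: "j < n" "l < n"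
  shows "(\<Sum>i<m. f (i*n+j) (i*n+l)) \<le> (\<Sum>x<m*n. \<Sum>y<m*n. f x y)"
proof -
  have inj: "inj_on (\<lambda>i. (i*n+j, i*n+l)) {..<m}"
    using jl by (auto simp: inj_on_def)
  have "(\<Sum>i<m. f (i*n+j) (i*n+l)) = (\<Sum>p\<in>(\<lambda>i. (i*n+j, i*n+l)) ` {..<m}. f (fst p) (snd p))"
    by (subst sum.reindex[OF inj]) simp
  also have "\<dots> \<le> (\<Sum>p\<in>{..<m*n} \<times> {..<m*n}. f (fst p) (snd p))"
    by (rule sum_mono2) (use f jl idx_lt in auto)
  also have "\<dots> = (\<Sum>x<m*n. \<Sum>y<m*n. f x y)"
    by (simp add: sum.cartesian_product case_prod_beta)
  finally show ?thesis .
qed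

lemma pick_le1:
  fixes f :: "nat \<Rightarrow> real"
  assumes f: "\<And>x. 0 \<le> f x" and j: "j < n"
  shows "(\<Sum>i<m. f (i*n+j)) \<le> (\<Sum>x<m*n. f x)"
proof -
  have inj: "inj_on (\<lambda>i. i*n+j) {..<m}"
    using j by (auto simp: inj_on_def)
  have "(\<Sum>i<m. f (i*n+j)) = (\<Sum>p\<in>(\<lambda>i. i*n+j) ` {..<m}. f p)"
    by (subst sum.reindex[OF inj]) simp
  also have "\<dots> \<le> (\<Sum>x<m*n. f x)"
    by (rule sum_mono2) (use f j idx_lt in auto)
  finally show ?thesis .
qed

context
  fixes N :: nat and Q :: "(nat \<Rightarrow> nat \<Rightarrow> complex) measure" and lam :: "nat \<Rightarrow> real" and K :: real
  assumes haar: "haar_unitary N Q" and lamK: "\<forall>p<N. \<bar>lam p\<bar> \<le> K"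
begin

lemma Re_bd: "unitary_cmat N U \<Longrightarrow> \<bar>Re (conj_diag N U lam a b)\<bar> \<le> N * K"
  using abs_Re_le_cmod H_bound[OF _ lamK] order_trans by blast

lemma Im_bd: "unitary_cmat N U \<Longrightarrow> \<bar>Im (conj_diag N U lam a b)\<bar> \<le> N * K"
  using abs_Im_le_cmod H_bound[OF _ lamK] order_trans by blast

lemma intg_RR: "integrable Q (\<lambda>U. Re (conj_diag N U lam a b) * Re (conj_diag N U lam a' b'))"
  by (rule haar_intg[OF haar _ prod_bd[OF Re_bd Re_bd]]) auto

lemma intg_II: "integrable Q (\<lambda>U. Im (conj_diag N U lam a b) * Im (conj_diag N U lam a' b'))"
  by (rule haar_intg[OF haar _ prod_bd[OF Im_bd Im_bd]]) auto

lemma intg_cmod: "integrable Q (\<lambda>U. cmod (conj_diag N U lam a b) ^ 2)"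
proof (rule haar_intg[OF haar])
  fix U assume u: "unitary_cmat N U"
  have "\<bar>cmod (conj_diag N U lam a b) ^ 2\<bar> = \<bar>cmod (conj_diag N U lam a b) * cmod (conj_diag N U lam a b)\<bar>"
    by (simp add: power2_eq_square)
  also have "\<dots> \<le> (N*K) * (N*K)"
    by (rule prod_bd) (use H_bound[OF u lamK] in auto)
  finally show "\<bar>cmod (conj_diag N U lam a b) ^ 2\<bar> \<le> (N*K) * (N*K)" .
qed auto

lemma frob_int: "(\<integral>U. (\<Sum>a<N. \<Sum>b<N. cmod (conj_diag N U lam a b) ^ 2) \<partial>Q) \<le> N * K^2"
proof -
  interpret prob_space Q using haar unfolding haar_unitary_def by auto
  have "(\<integral>U. (\<Sum>a<N. \<Sum>b<N. cmod (conj_diag N U lam a b) ^ 2) \<partial>Q) = (\<integral>U. (\<Sum>p<N. lam p ^ 2) \<partial>Q)"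
  proof (rule integral_cong_AE)
    show "AE U in Q. (\<Sum>a<N. \<Sum>b<N. cmod (conj_diag N U lam a b) ^ 2) = (\<Sum>p<N. lam p ^ 2)"
      using haar_AE[OF haar] by eventually_elim (rule frob)
  qed (auto intro!: haar_meas[OF haar])
  also have "\<dots> = (\<Sum>p<N. lam p ^ 2)" by (simp add: prob_space)
  also have "\<dots> \<le> (\<Sum>p<N. K ^ 2)"
  proof (rule sum_mono)
    fix p assume "p \<in> {..<N}"
    then have "\<bar>lam p\<bar> \<le> K" using lamK by auto
    then have "\<bar>lam p\<bar> ^ 2 \<le> K ^ 2" by (intro power_mono) auto
    then show "lam p ^ 2 \<le> K ^ 2" by simp
  qed
  finally show ?thesis by simp
qed


lemma offdiag:
  assumes N: "N = m * n" and jl: "j < n" "l < n" "j \<noteq> l"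
  shows "(\<integral>U. cmod (\<Sum>i<m. conj_diag N U lam (i*n+j) (i*n+l)) ^ 2 \<partial>Q) \<le> N * K^2"
proof -
  define z where "z i U = conj_diag N U lam (i*n+j) (i*n+l)" for i U
  have idx: "\<And>i. i < m \<Longrightarrow> i*n+j < N" "\<And>i. i < m \<Longrightarrow> i*n+l < N"
    using idx_lt jl N by auto
  have dist: "\<And>i k. i*n+j \<noteq> k*n+l"
    using idx_mod[of j n] idx_mod[of l n] jl by metis
  have inj: "\<And>i k. i*n+j = k*n+j \<Longrightarrow> i = k"
    using jl by simp
  have cross_gen: "(\<integral>U. f (z i U) * f (z k U) \<partial>Q) = 0"
    if ik: "i < m" "k < m" "i \<noteq> k" and f: "f = Re \<or> f = Im" for i k f
  proof -
    define V where "V = sgnm N (i*n+j)"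
    have fm: "(\<lambda>U. f (z i U) * f (z k U)) \<in> borel_measurable borel"
      using f unfolding z_def by auto
    have "(\<integral>U. f (z i U) * f (z k U) \<partial>Q) = (\<integral>U. f (z i (cmat_mult N V U)) * f (z k (cmat_mult N V U)) \<partial>Q)"
      unfolding V_def by (rule haar_inv[OF haar unitary_sgnm fm])
    also have "\<dots> = (\<integral>U. - (f (z i U) * f (z k U)) \<partial>Q)"
    proof (rule Bochner_Integration.integral_cong[OF refl])
      fix U assume "U \<in> space Q"
      have "z i (cmat_mult N V U) = - z i U"
        proof -
        have "i*n+l \<noteq> i*n+j" using dist by metis
        then show ?thesis unfolding z_def V_def using idx ik by (simp add: conj_sgnm)
      qed
      moreover have "z k (cmat_mult N V U) = z k U"
        proof -
        have "k*n+j \<noteq> i*n+j" using inj ik(3) by metis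
        moreover have "k*n+l \<noteq> i*n+j" using dist by metis
        ultimately show ?thesis unfolding z_def V_def using idx ik by (simp add: conj_sgnm)
      qed
      ultimately show "f (z i (cmat_mult N V U)) * f (z k (cmat_mult N V U)) = - (f (z i U) * f (z k U))"
        using f by auto
    qed
    also have "\<dots> = - (\<integral>U. f (z i U) * f (z k U) \<partial>Q)" by (rule Bochner_Integration.integral_minus)
    finally show ?thesis by linarith
  qed
  have intR: "\<And>i k. integrable Q (\<lambda>U. Re (z i U) * Re (z k U))"
    unfolding z_def by (rule intg_RR)
  have intI: "\<And>i k. integrable Q (\<lambda>U. Im (z i U) * Im (z k U))"
    unfolding z_def by (rule intg_II)
  have diagR: "(\<Sum>k<m. \<integral>U. Re (z i U) * Re (z k U) \<partial>Q) = (\<integral>U. Re (z i U) * Re (z i U) \<partial>Q)"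
    if "i < m" for i
  proof -
    have "(\<Sum>k<m. \<integral>U. Re (z i U) * Re (z k U) \<partial>Q) = (\<Sum>k<m. if k = i then \<integral>U. Re (z i U) * Re (z i U) \<partial>Q else 0)"
      using that cross_gen[of i _ Re] by (intro sum.cong refl) auto
    then show ?thesis using that by simp
  qed
  have diagI: "(\<Sum>k<m. \<integral>U. Im (z i U) * Im (z k U) \<partial>Q) = (\<integral>U. Im (z i U) * Im (z i U) \<partial>Q)"
    if "i < m" for i
  proof -
    have "(\<Sum>k<m. \<integral>U. Im (z i U) * Im (z k U) \<partial>Q) = (\<Sum>k<m. if k = i then \<integral>U. Im (z i U) * Im (z i U) \<partial>Q else 0)"
      using that cross_gen[of i _ Im] by (intro sum.cong refl) auto
    then show ?thesis using that by simp
  qed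
  note sqR = int_sq_sum[of "{..<m}" Q "\<lambda>i U. Re (z i U)", OF _ intR, simplified]
  note sqI = int_sq_sum[of "{..<m}" Q "\<lambda>i U. Im (z i U)", OF _ intI, simplified]
  have intcm: "\<And>i. integrable Q (\<lambda>U. cmod (z i U) ^ 2)"
    unfolding z_def by (rule intg_cmod)
  have "(\<integral>U. cmod (\<Sum>i<m. z i U) ^ 2 \<partial>Q) = (\<integral>U. (\<Sum>i<m. Re (z i U)) ^ 2 + (\<Sum>i<m. Im (z i U)) ^ 2 \<partial>Q)"
    by (simp add: cmod_power2 Re_sum Im_sum)
  also have "\<dots> = (\<integral>U. (\<Sum>i<m. Re (z i U)) ^ 2 \<partial>Q) + (\<integral>U. (\<Sum>i<m. Im (z i U)) ^ 2 \<partial>Q)"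
    by (rule Bochner_Integration.integral_add) (use sqR sqI in auto)
  also have "\<dots> = (\<Sum>i<m. \<integral>U. Re (z i U) * Re (z i U) \<partial>Q) + (\<Sum>i<m. \<integral>U. Im (z i U) * Im (z i U) \<partial>Q)"
    using sqR(2) sqI(2) diagR diagI by simp
  also have "\<dots> = (\<integral>U. (\<Sum>i<m. cmod (z i U) ^ 2) \<partial>Q)"
  proof -
    have "(\<integral>U. (\<Sum>i<m. cmod (z i U) ^ 2) \<partial>Q) = (\<Sum>i<m. \<integral>U. cmod (z i U) ^ 2 \<partial>Q)"
      by (rule Bochner_Integration.integral_sum) (use intcm in auto)
    also have "\<dots> = (\<Sum>i<m. (\<integral>U. Re (z i U) * Re (z i U) \<partial>Q) + (\<integral>U. Im (z i U) * Im (z i U) \<partial>Q))"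
    proof (intro sum.cong refl)
      fix i
      have "(\<integral>U. cmod (z i U) ^ 2 \<partial>Q) = (\<integral>U. Re (z i U) * Re (z i U) + Im (z i U) * Im (z i U) \<partial>Q)"
        using cmod_sq_ri by presburger
      also have "\<dots> = (\<integral>U. Re (z i U) * Re (z i U) \<partial>Q) + (\<integral>U. Im (z i U) * Im (z i U) \<partial>Q)"
        by (rule Bochner_Integration.integral_add) (use intR intI in auto)
      finally show "(\<integral>U. cmod (z i U) ^ 2 \<partial>Q) = (\<integral>U. Re (z i U) * Re (z i U) \<partial>Q) + (\<integral>U. Im (z i U) * Im (z i U) \<partial>Q)" .
    qed
    also have "\<dots> = (\<Sum>i<m. \<integral>U. Re (z i U) * Re (z i U) \<partial>Q) + (\<Sum>i<m. \<integral>U. Im (z i U) * Im (z i U) \<partial>Q)"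
      by (simp add: sum.distrib)
    finally show ?thesis by simp
  qed
  also have "\<dots> \<le> (\<integral>U. (\<Sum>a<N. \<Sum>b<N. cmod (conj_diag N U lam a b) ^ 2) \<partial>Q)"
  proof (rule Bochner_Integration.integral_mono)
    show "integrable Q (\<lambda>U. \<Sum>i<m. cmod (z i U) ^ 2)" using intcm by auto
    show "integrable Q (\<lambda>U. \<Sum>a<N. \<Sum>b<N. cmod (conj_diag N U lam a b) ^ 2)"
      using intg_cmod by auto
    fix U
    show "(\<Sum>i<m. cmod (z i U) ^ 2) \<le> (\<Sum>a<N. \<Sum>b<N. cmod (conj_diag N U lam a b) ^ 2)"
      unfolding z_def N using pick_le2[of "\<lambda>a b. cmod (conj_diag (m*n) U lam a b) ^ 2" j n l m] jl by auto
  qed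
  also have "\<dots> \<le> N * K^2" by (rule frob_int)
  finally show ?thesis unfolding z_def .
qed



lemma intg_off: "integrable Q (\<lambda>U. cmod (\<Sum>i<(m::nat). conj_diag N U lam (f i) (g i)) ^ 2)"
proof -
  have "integrable Q (\<lambda>U. (\<Sum>i<m. Re (conj_diag N U lam (f i) (g i))) ^ 2 + (\<Sum>i<m. Im (conj_diag N U lam (f i) (g i))) ^ 2)"
    by (intro Bochner_Integration.integrable_add int_sq_sum(1) intg_RR intg_II) auto
  then show ?thesis by (simp add: cmod_power2 Re_sum Im_sum)
qed

lemma intg_dg: "integrable Q (\<lambda>U. (\<Sum>i<(m::nat). Re (conj_diag N U lam (f i) (f i)) - c) ^ 2)"
proof (rule int_sq_sum(1))
  fix i k
  have bd: "\<bar>Re (conj_diag N U lam a a) - c\<bar> \<le> N*K + \<bar>c\<bar>" if u: "unitary_cmat N U" for a U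
  proof -
    have "\<bar>Re (conj_diag N U lam a a)\<bar> \<le> N*K" by (rule Re_bd[OF u])
    moreover have "\<bar>Re (conj_diag N U lam a a) - c\<bar> \<le> \<bar>Re (conj_diag N U lam a a)\<bar> + \<bar>c\<bar>"
      by (rule abs_triangle_ineq4)
    ultimately show ?thesis by linarith
  qed
  show "integrable Q (\<lambda>U. (Re (conj_diag N U lam (f i) (f i)) - c) * (Re (conj_diag N U lam (f k) (f k)) - c))"
    by (rule haar_intg[OF haar _ prod_bd[OF bd bd]]) auto
qed auto

lemma diagl:
  assumes N: "N = m * n" and j: "j < n" and N2: "2 \<le> N"
  shows "(\<integral>U. (\<Sum>i<m. (Re (conj_diag N U lam (i*n+j) (i*n+j)) - (\<Sum>p<N. lam p) / N)) ^ 2 \<partial>Q) \<le> N * K^2"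
proof -
  define c where "c = (\<Sum>p<N. lam p) / N"
  define d where "d a U = Re (conj_diag N U lam a a) - c" for a U
  have dm[measurable]: "\<And>a. (\<lambda>U. d a U) \<in> borel_measurable borel" unfolding d_def by measurable
  have cK: "\<bar>c\<bar> \<le> K"
  proof -
    have "\<bar>\<Sum>p<N. lam p\<bar> \<le> (\<Sum>p<N. \<bar>lam p\<bar>)" by (rule sum_abs)
    also have "\<dots> \<le> (\<Sum>p<N. K)" using lamK by (intro sum_mono) auto
    finally have "\<bar>\<Sum>p<N. lam p\<bar> \<le> N * K" by simp
    then show ?thesis using N2 unfolding c_def by (simp add: divide_le_eq mult.commute)
  qed
  have dbd: "\<bar>d a U\<bar> \<le> N*K + K" if u: "unitary_cmat N U" for a U
  proof -
    have "\<bar>Re (conj_diag N U lam a a)\<bar> \<le> N*K" by (rule Re_bd[OF u])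
    moreover have "\<bar>Re (conj_diag N U lam a a) - c\<bar> \<le> \<bar>Re (conj_diag N U lam a a)\<bar> + \<bar>c\<bar>"
      by (rule abs_triangle_ineq4)
    ultimately show ?thesis using cK unfolding d_def by linarith
  qed
  have intd: "\<And>a b. integrable Q (\<lambda>U. d a U * d b U)"
    by (rule haar_intg[OF haar _ prod_bd[OF dbd dbd]]) auto
  define \<gamma> where "\<gamma> = (\<integral>U. d 0 U * d 1 U \<partial>Q)"
  have pair: "(\<integral>U. d a U * d b U \<partial>Q) = \<gamma>" if ab: "a < N" "b < N" "a \<noteq> b" for a b
  proof -
    define s where "s = sw (sw 0 a 1) b \<circ> sw 0 a"
    have lt: "0 < N" "1 < N" "sw 0 a 1 < N" using N2 ab by (auto simp: sw_def)
    have bij: "bij_betw s {..<N} {..<N}"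
      unfolding s_def by (rule bij_betw_trans[OF bij_sw bij_sw]) (use lt ab in auto)
    have s0: "s 0 = a" and s1: "s 1 = b" using ab by (auto simp: s_def sw_def)
    have "\<gamma> = (\<integral>U. d 0 (cmat_mult N (permm N s) U) * d 1 (cmat_mult N (permm N s) U) \<partial>Q)"
      unfolding \<gamma>_def by (rule haar_inv[OF haar unitary_permm[OF bij]]) auto
    also have "\<dots> = (\<integral>U. d a U * d b U \<partial>Q)"
    proof (rule Bochner_Integration.integral_cong[OF refl])
      fix U
      have c0: "conj_diag N (cmat_mult N (permm N s) U) lam 0 0 = conj_diag N U lam a a"
        using conj_permm[OF bij lt(1) lt(1)] s0 by simp
      have c1: "conj_diag N (cmat_mult N (permm N s) U) lam 1 1 = conj_diag N U lam b b"
        using conj_permm[OF bij lt(2) lt(2)] s1 by simp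
      show "d 0 (cmat_mult N (permm N s) U) * d 1 (cmat_mult N (permm N s) U) = d a U * d b U"
        unfolding d_def c0 c1 by (rule refl)
    qed
    finally show ?thesis by simp
  qed
  define S where "S = (\<Sum>a<N. \<integral>U. d a U * d a U \<partial>Q)"
  have S_nonneg: "0 \<le> S"
    unfolding S_def by (intro sum_nonneg Bochner_Integration.integral_nonneg) auto
  have rowsum: "(\<Sum>k\<in>A. \<integral>U. d (f a) U * d (f k) U \<partial>Q) = (\<integral>U. d (f a) U * d (f a) U \<partial>Q) + (real (card A) - 1) * \<gamma>"
    if "finite A" "a \<in> A" "\<And>k. k \<in> A \<Longrightarrow> f k < N" "inj_on f A" for A :: "nat set" and a f
  proof -
    have "(\<Sum>k\<in>A. \<integral>U. d (f a) U * d (f k) U \<partial>Q) = (\<Sum>k\<in>A. if k = a then \<integral>U. d (f a) U * d (f a) U \<partial>Q else \<gamma>)"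
    proof (intro sum.cong refl)
      fix k assume k: "k \<in> A"
      show "(\<integral>U. d (f a) U * d (f k) U \<partial>Q) = (if k = a then \<integral>U. d (f a) U * d (f a) U \<partial>Q else \<gamma>)"
      proof (cases "k = a")
        case False
        then have "f a \<noteq> f k" using that(2,4) k by (metis inj_onD)
        then show ?thesis using pair that k False by auto
      qed simp
    qed
    also have "\<dots> = (\<integral>U. d (f a) U * d (f a) U \<partial>Q) + (real (card A) - 1) * \<gamma>"
      by (rule sum_if_eq) (use that in auto)
    finally show ?thesis .
  qed
  have zero: "(\<integral>U. (\<Sum>a<N. d a U) ^ 2 \<partial>Q) = 0"
  proof -
    have "(\<integral>U. (\<Sum>a<N. d a U) ^ 2 \<partial>Q) = (\<integral>U. 0 \<partial>Q)"
    proof (rule integral_cong_AE)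
      show "AE U in Q. (\<Sum>a<N. d a U) ^ 2 = 0"
        using haar_AE[OF haar]
      proof eventually_elim
        case (elim U)
        have "(\<Sum>a<N. d a U) = (\<Sum>a<N. Re (conj_diag N U lam a a)) - N * c"
          by (simp add: d_def sum_subtractf)
        also have "\<dots> = 0" using trace_H[OF elim] N2 by (simp add: c_def)
        finally show ?case by simp
      qed
    qed (auto intro!: haar_meas[OF haar])
    then show ?thesis by simp
  qed
  have "0 = (\<Sum>a<N. \<Sum>k<N. \<integral>U. d a U * d k U \<partial>Q)"
    using zero int_sq_sum(2)[of "{..<N}" Q d, OF _ intd] by simp
  also have "\<dots> = (\<Sum>a<N. (\<integral>U. d a U * d a U \<partial>Q) + (real N - 1) * \<gamma>)"
    using rowsum[of "{..<N}" _ id] by (intro sum.cong refl) auto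
  also have "\<dots> = S + real N * (real N - 1) * \<gamma>"
    by (simp add: S_def sum.distrib)
  finally have eq0: "S + real N * (real N - 1) * \<gamma> = 0" by simp
  have g0: "\<gamma> \<le> 0"
  proof (rule ccontr)
    assume "\<not> \<gamma> \<le> 0"
    moreover have "0 < real N * (real N - 1)" using N2 by simp
    ultimately have "0 < real N * (real N - 1) * \<gamma>" by simp
    then show False using eq0 S_nonneg by linarith
  qed
  have SK: "S \<le> N * K^2"
  proof -
    have "S = (\<integral>U. (\<Sum>a<N. d a U * d a U) \<partial>Q)"
      unfolding S_def by (rule Bochner_Integration.integral_sum[symmetric]) (use intd in auto)
    also have "\<dots> \<le> (\<integral>U. (\<Sum>a<N. \<Sum>b<N. cmod (conj_diag N U lam a b) ^ 2) \<partial>Q)"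
    proof (rule integral_mono_AE)
      show "integrable Q (\<lambda>U. \<Sum>a<N. d a U * d a U)" using intd by auto
      show "integrable Q (\<lambda>U. \<Sum>a<N. \<Sum>b<N. cmod (conj_diag N U lam a b) ^ 2)"
        using intg_cmod by auto
      show "AE U in Q. (\<Sum>a<N. d a U * d a U) \<le> (\<Sum>a<N. \<Sum>b<N. cmod (conj_diag N U lam a b) ^ 2)"
        using haar_AE[OF haar]
      proof eventually_elim
        case (elim U)
        define h where "h a = Re (conj_diag N U lam a a)" for a
        have sh: "(\<Sum>a<N. h a) = N * c" using trace_H[OF elim] N2 by (simp add: c_def h_def)
        have "(\<Sum>a<N. d a U * d a U) = (\<Sum>a<N. h a * h a) - 2 * c * (\<Sum>a<N. h a) + N * (c * c)"
          by (simp add: d_def h_def algebra_simps sum.distrib sum_subtractf sum_distrib_left)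
        also have "\<dots> = (\<Sum>a<N. h a * h a) - N * (c * c)" using sh by (simp add: algebra_simps)
        also have "\<dots> \<le> (\<Sum>a<N. h a * h a)" by simp
        also have "\<dots> \<le> (\<Sum>a<N. \<Sum>b<N. cmod (conj_diag N U lam a b) ^ 2)"
        proof (rule sum_mono)
          fix a assume a: "a \<in> {..<N}"
          have "h a * h a \<le> cmod (conj_diag N U lam a a) ^ 2"
            unfolding h_def cmod_sq_ri by simp
          also have "\<dots> \<le> (\<Sum>b<N. cmod (conj_diag N U lam a b) ^ 2)"
            by (rule member_le_sum) (use a in auto)
          finally show "h a * h a \<le> (\<Sum>b<N. cmod (conj_diag N U lam a b) ^ 2)" .
        qed
        finally show ?case .
      qed
    qed
    also have "\<dots> \<le> N * K^2" by (rule frob_int)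
    finally show ?thesis .
  qed
  define w where "w i U = d (i*n+j) U" for i U
  have intw: "\<And>i k. integrable Q (\<lambda>U. w i U * w k U)" unfolding w_def by (rule intd)
  have "(\<integral>U. (\<Sum>i<m. w i U) ^ 2 \<partial>Q) = (\<Sum>i<m. \<Sum>k<m. \<integral>U. w i U * w k U \<partial>Q)"
    using int_sq_sum(2)[of "{..<m}" Q w, OF _ intw] by simp
  also have "\<dots> = (\<Sum>i<m. (\<integral>U. w i U * w i U \<partial>Q) + (real m - 1) * \<gamma>)"
    unfolding w_def
    using rowsum[of "{..<m}" _ "\<lambda>i. i*n+j"] idx_lt[OF j] N j
    by (intro sum.cong refl) (auto simp: inj_on_def)
  also have "\<dots> = (\<Sum>i<m. \<integral>U. w i U * w i U \<partial>Q) + real m * (real m - 1) * \<gamma>"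
    by (simp add: sum.distrib)
  also have "\<dots> \<le> (\<Sum>i<m. \<integral>U. w i U * w i U \<partial>Q)"
  proof -
    have "0 \<le> real m * (real m - 1)" by (cases m) auto
    then have "real m * (real m - 1) * \<gamma> \<le> 0" using g0 by (simp add: mult_nonneg_nonpos)
    then show ?thesis by simp
  qed
  also have "\<dots> \<le> S"
    unfolding S_def w_def N
    by (rule pick_le1[OF _ j]) (auto intro!: Bochner_Integration.integral_nonneg)
  also have "\<dots> \<le> N * K^2" by (rule SK)
  finally show ?thesis unfolding w_def d_def c_def .
qed

end


lemma emp_integral:
  fixes f :: "real \<Rightarrow> real"
  assumes "0 < N"
  shows "(\<integral>x. f x \<partial>emp_measure N l) = (\<Sum>p<N. f (l p)) / N"
proof -
  have ne: "{..<N} \<noteq> {}" using assms by auto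
  show ?thesis unfolding emp_measure_def by (simp add: integral_pmf_of_set[OF ne])
qed

lemma emp_supp:
  assumes "0 < N" "AE x in emp_measure N l. P x"
  shows "\<forall>p<N. P (l p)"
proof -
  have ne: "{..<N} \<noteq> {}" using assms by auto
  show ?thesis using assms(2) unfolding emp_measure_def by (simp add: AE_measure_pmf_iff set_pmf_of_set[OF ne])
qed

lemma conv_moment:
  fixes E :: "nat \<Rightarrow> real measure"
  assumes E: "\<And>k. E k = emp_measure (Nk k) (l k)" and Npos: "\<And>k. 0 < Nk k"
    and bd: "\<And>k p. p < Nk k \<Longrightarrow> \<bar>l k p\<bar> \<le> K"
    and mu: "real_distribution \<mu>" and conv: "weak_conv_m E \<mu>"
  shows "(\<lambda>k. (\<Sum>p<Nk k. l k p) / Nk k) \<longlonglongrightarrow> moment \<mu> 1"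
proof -
  interpret mu: real_distribution \<mu> by (rule mu)
  define M' where "M' k = distr (E k) borel (\<lambda>x. x)" for k
  have rd: "real_distribution (M' k)" for k
  proof -
    interpret prob_space "E k" unfolding E emp_measure_def by (rule prob_space_measure_pmf)
    have "prob_space (M' k)" unfolding M'_def
      by (rule prob_space_distr) (simp add: E emp_measure_def)
    then show ?thesis unfolding real_distribution_def real_distribution_axioms_def M'_def by simp
  qed
  have cdfeq: "cdf (M' k) = cdf (E k)" for k
  proof
    fix x
    show "cdf (M' k) x = cdf (E k) x"
      unfolding cdf_def M'_def
      by (subst measure_distr) (auto simp: E emp_measure_def)
  qed
  have conv': "weak_conv_m M' \<mu>"
    using conv unfolding weak_conv_m_def cdfeq .
  have intE: "(\<integral>x. f x \<partial>M' k) = (\<integral>x. f x \<partial>E k)" if "f \<in> borel_measurable borel" for f :: "real \<Rightarrow> real" and k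
    unfolding M'_def by (subst integral_distr) (auto simp: E emp_measure_def that)
  have lim: "(\<lambda>k. \<integral>x. f x \<partial>E k) \<longlonglongrightarrow> (\<integral>x. f x \<partial>\<mu>)"
    if c: "\<And>x. isCont f x" and b: "\<And>x. norm (f x) \<le> B" for f :: "real \<Rightarrow> real" and B
  proof -
    have fm: "f \<in> borel_measurable borel"
      using c by (intro borel_measurable_continuous_onI continuous_at_imp_continuous_on) auto
    have "(\<lambda>k. \<integral>x. f x \<partial>M' k) \<longlonglongrightarrow> (\<integral>x. f x \<partial>\<mu>)"
      by (rule weak_conv_imp_integral_bdd_continuous_conv[OF rd mu conv' c b])
    then show ?thesis using intE[OF fm] by simp
  qed
  define g where "g x = min 1 (max 0 (\<bar>x\<bar> - K))" for x :: real
  have gc: "\<And>x. isCont g x" unfolding g_def by (intro continuous_intros)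
  have gb: "\<And>x. norm (g x) \<le> 1" unfolding g_def by auto
  have gE: "(\<integral>x. g x \<partial>E k) = 0" for k
  proof -
    have "(\<integral>x. g x \<partial>E k) = (\<Sum>p<Nk k. g (l k p)) / Nk k" unfolding E by (rule emp_integral[OF Npos])
    also have "(\<Sum>p<Nk k. g (l k p)) = 0"
      using bd[of _ k] by (intro sum.neutral) (auto simp: g_def)
    finally show ?thesis by simp
  qed
  have "(\<lambda>k. \<integral>x. g x \<partial>E k) \<longlonglongrightarrow> (\<integral>x. g x \<partial>\<mu>)" by (rule lim[OF gc gb])
  then have g0: "(\<integral>x. g x \<partial>\<mu>) = 0" using gE by (simp add: LIMSEQ_const_iff)
  have gm: "g \<in> borel_measurable \<mu>"
  proof -
    have "g \<in> borel_measurable borel"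
      using gc by (intro borel_measurable_continuous_onI continuous_at_imp_continuous_on) auto
    then show ?thesis using measurable_cong_sets[OF mu.events_eq_borel refl] by blast
  qed
  have gi: "integrable \<mu> g"
    by (rule mu.integrable_const_bound[where B=1]) (use gb gm in auto)
  have "AE x in \<mu>. g x = 0"
    using integral_nonneg_eq_0_iff_AE[OF gi] g0 by (simp add: g_def)
  then have aeK: "AE x in \<mu>. \<bar>x\<bar> \<le> K"
    by eventually_elim (auto simp: g_def min_def max_def split: if_splits)
  define f where "f x = max (-K) (min K x)" for x :: real
  have fc: "\<And>x. isCont f x" unfolding f_def by (intro continuous_intros)
  have fb: "\<And>x. norm (f x) \<le> \<bar>K\<bar>" unfolding f_def by auto
  have fE: "(\<integral>x. f x \<partial>E k) = (\<Sum>p<Nk k. l k p) / Nk k" for k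
  proof -
    have "(\<integral>x. f x \<partial>E k) = (\<Sum>p<Nk k. f (l k p)) / Nk k" unfolding E by (rule emp_integral[OF Npos])
    also have "(\<Sum>p<Nk k. f (l k p)) = (\<Sum>p<Nk k. l k p)"
    proof (intro sum.cong refl)
      fix p assume "p \<in> {..<Nk k}"
      then have "\<bar>l k p\<bar> \<le> K" using bd by auto
      then show "f (l k p) = l k p" by (auto simp: f_def abs_le_iff max_def min_def)
    qed
    finally show ?thesis .
  qed
  have fmu: "(\<integral>x. f x \<partial>\<mu>) = moment \<mu> 1"
    unfolding moment_def
  proof (rule integral_cong_AE)
    show "AE x in \<mu>. f x = x ^ 1" using aeK by eventually_elim (auto simp: f_def abs_le_iff)
    have "f \<in> borel_measurable borel"
      using fc by (intro borel_measurable_continuous_onI continuous_at_imp_continuous_on) auto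
    then show "f \<in> borel_measurable \<mu>" using measurable_cong_sets[OF mu.events_eq_borel refl] by blast
    show "(\<lambda>x. x ^ 1) \<in> borel_measurable \<mu>" by simp
  qed
  show ?thesis using lim[OF fc fb] unfolding fE fmu .
qed


lemma sq_split: "((u::real) + v) ^ 2 \<le> 2 * u ^ 2 + 2 * v ^ 2"
proof -
  have "0 \<le> (u - v) ^ 2" by simp
  then show ?thesis by (simp add: power2_eq_square algebra_simps)
qed

lemma per_m:
  fixes P :: "'w measure" and Um :: "'w \<Rightarrow> nat \<Rightarrow> nat \<Rightarrow> complex"
  assumes haar: "haar_unitary N (distr P borel Um)" and lamK: "\<forall>p<N. \<bar>lam p\<bar> \<le> K"
    and N: "N = m * n" and m: "0 < m" and N2: "2 \<le> N" and eps: "0 < \<epsilon>"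
    and P: "prob_space P" and Um: "Um \<in> borel_measurable P"
  shows "measure P {\<omega> \<in> space P. \<exists>j<n. \<exists>l<n.
            cmod (pi2 m n (\<lambda>a b. conj_diag N (Um \<omega>) lam a b / of_nat m) j l
                  - (if j = l then complex_of_real c else 0)) > \<epsilon>}
         \<le> (real n * real n * (2 * (N * K^2) / (real m)^2 + 2 * ((\<Sum>p<N. lam p) / N - c)^2)) / \<epsilon>^2"
proof -
  interpret P: prob_space P by (rule P)
  define Q where "Q = distr P borel Um"
  have haarQ: "haar_unitary N Q" using haar by (simp add: Q_def)
  interpret Q: prob_space Q using haarQ unfolding haar_unitary_def by auto
  define cm where "cm = (\<Sum>p<N. lam p) / N"
  define ent where "ent U j l = pi2 m n (\<lambda>a b. conj_diag N U lam a b / of_nat m) j l - (if j = l then complex_of_real c else 0)" for U j l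
  define r where "r j l U = (if j = l
      then 2 * ((\<Sum>i<m. Re (conj_diag N U lam (i*n+j) (i*n+j)) - cm) ^ 2 / (real m)^2) + 2 * (cm - c)^2
      else cmod (\<Sum>i<m. conj_diag N U lam (i*n+j) (i*n+l)) ^ 2 / (real m)^2)" for j l U
  define R where "R U = (\<Sum>j<n. \<Sum>l<n. r j l U)" for U
  have r_nonneg: "0 \<le> r j l U" for j l U unfolding r_def by auto
  have pt: "cmod (ent U j l) ^ 2 \<le> r j l U" if jl: "j < n" "l < n" for U j l
  proof (cases "j = l")
    case False
    have "ent U j l = (\<Sum>i<m. conj_diag N U lam (i*n+j) (i*n+l)) / of_nat m"
      using jl False by (simp add: ent_def pi2_def sum_divide_distrib)
    then show ?thesis using False by (simp add: r_def norm_divide power_divide)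
  next
    case True
    define x where "x = (\<Sum>i<m. Re (conj_diag N U lam (i*n+j) (i*n+j)))"
    have re: "conj_diag N U lam a a = complex_of_real (Re (conj_diag N U lam a a))" for a
      by (rule complex_eqI) (simp_all add: diag_real)
    have "ent U j l = complex_of_real (x / m - c)"
      using jl True unfolding ent_def pi2_def x_def
      by (simp add: sum_divide_distrib[symmetric] re[symmetric])
    then have "cmod (ent U j l) ^ 2 = (x / m - c) ^ 2" by (simp only: norm_of_real power2_abs)
    also have "x / m - c = (\<Sum>i<m. Re (conj_diag N U lam (i*n+j) (i*n+j)) - cm) / m + (cm - c)"
      using m by (simp add: x_def sum_subtractf field_simps)
    also have "(\<dots>) ^ 2 \<le> 2 * ((\<Sum>i<m. Re (conj_diag N U lam (i*n+j) (i*n+j)) - cm) / m) ^ 2 + 2 * (cm - c) ^ 2"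
      by (rule sq_split)
    finally show ?thesis using True by (simp add: r_def power_divide)
  qed
  have rm: "(\<lambda>U. r j l U) \<in> borel_measurable borel" for j l
    by (cases "j = l") (simp_all add: r_def)
  have Rm: "R \<in> borel_measurable borel"
    unfolding R_def using rm by (intro borel_measurable_sum) auto
  have ri: "integrable Q (r j l)" for j l
  proof (cases "j = l")
    case True
    have "integrable Q (\<lambda>U. 2 * ((\<Sum>i<m. Re (conj_diag N U lam (i*n+j) (i*n+j)) - cm) ^ 2 / (real m)^2) + 2 * (cm - c)^2)"
      using intg_dg[OF haarQ lamK, where m=m and f="\<lambda>i. i*n+j" and c=cm] by auto
    then show ?thesis using True unfolding r_def by simp
  next
    case False
    have "integrable Q (\<lambda>U. cmod (\<Sum>i<m. conj_diag N U lam (i*n+j) (i*n+l)) ^ 2 / (real m)^2)"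
      using intg_off[OF haarQ lamK, where m=m and f="\<lambda>i. i*n+j" and g="\<lambda>i. i*n+l"] by auto
    then show ?thesis using False unfolding r_def by simp
  qed
  have rint: "(\<integral>U. r j l U \<partial>Q) \<le> 2 * (N * K^2) / (real m)^2 + 2 * (cm - c)^2" if jl: "j < n" "l < n" for j l
  proof (cases "j = l")
    case True
    have i1: "integrable Q (\<lambda>U. (\<Sum>i<m. Re (conj_diag N U lam (i*n+j) (i*n+j)) - cm) ^ 2)"
      by (rule intg_dg[OF haarQ lamK])
    have "(\<integral>U. r j l U \<partial>Q) = 2 * ((\<integral>U. (\<Sum>i<m. Re (conj_diag N U lam (i*n+j) (i*n+j)) - cm) ^ 2 \<partial>Q) / (real m)^2) + 2 * (cm - c)^2"
      using True i1 unfolding r_def by (simp add: Q.prob_space)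
    also have "\<dots> \<le> 2 * ((N * K^2) / (real m)^2) + 2 * (cm - c)^2"
      using diagl[OF haarQ lamK N jl(1) N2] unfolding cm_def
      by (intro add_mono mult_left_mono divide_right_mono) auto
    finally show ?thesis by simp
  next
    case False
    have "(\<integral>U. r j l U \<partial>Q) = (\<integral>U. cmod (\<Sum>i<m. conj_diag N U lam (i*n+j) (i*n+l)) ^ 2 \<partial>Q) / (real m)^2"
      using False unfolding r_def by simp
    also have "\<dots> \<le> (N * K^2) / (real m)^2"
      using offdiag[OF haarQ lamK N jl False] by (intro divide_right_mono) auto
    also have "\<dots> \<le> 2 * (N * K^2) / (real m)^2 + 2 * (cm - c)^2"
    proof -
      have a: "0 \<le> (N * K^2) / (real m)^2" by simp
      have b: "2 * (N * K^2) / (real m)^2 = 2 * ((N * K^2) / (real m)^2)" by simp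
      have "0 \<le> 2 * (cm - c)^2" by simp
      moreover define t where "t = (N * K^2) / (real m)^2"
      ultimately show ?thesis using a unfolding b t_def[symmetric] by linarith
    qed
    finally show ?thesis .
  qed
  have Rint: "(\<integral>U. R U \<partial>Q) \<le> real n * real n * (2 * (N * K^2) / (real m)^2 + 2 * (cm - c)^2)"
  proof -
    have "(\<integral>U. R U \<partial>Q) = (\<Sum>j<n. \<Sum>l<n. \<integral>U. r j l U \<partial>Q)"
      unfolding R_def using ri by (simp add: Bochner_Integration.integral_sum integrable_sum)
    also have "\<dots> \<le> (\<Sum>j<n. \<Sum>l<n. 2 * (N * K^2) / (real m)^2 + 2 * (cm - c)^2)"
      using rint by (intro sum_mono) auto
    finally show ?thesis by simp
  qed
  have Ri: "integrable Q R" unfolding R_def using ri by (auto intro!: integrable_sum)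
  have RiP: "integrable P (\<lambda>\<omega>. R (Um \<omega>))"
    using Ri unfolding Q_def by (subst (asm) integrable_distr_eq) (use Um Rm in auto)
  have RintP: "(\<integral>\<omega>. R (Um \<omega>) \<partial>P) = (\<integral>U. R U \<partial>Q)"
    unfolding Q_def by (rule integral_distr[symmetric]) (use Um Rm in auto)
  have RmP: "(\<lambda>\<omega>. R (Um \<omega>)) \<in> borel_measurable P"
    using measurable_compose[OF Um Rm] by simp
  have setm: "{\<omega> \<in> space P. \<epsilon>^2 \<le> R (Um \<omega>)} \<in> sets P"
    using RmP by measurable
  have sub: "{\<omega> \<in> space P. \<exists>j<n. \<exists>l<n. cmod (ent (Um \<omega>) j l) > \<epsilon>} \<subseteq> {\<omega> \<in> space P. \<epsilon>^2 \<le> R (Um \<omega>)}"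
  proof safe
    fix \<omega> j l assume \<omega>: "\<omega> \<in> space P" and jl: "j < n" "l < n" and gt: "\<epsilon> < cmod (ent (Um \<omega>) j l)"
    have "\<epsilon>^2 \<le> cmod (ent (Um \<omega>) j l) ^ 2" using gt eps by (intro power_mono) auto
    also have "\<dots> \<le> r j l (Um \<omega>)" by (rule pt[OF jl])
    also have "\<dots> \<le> (\<Sum>l'<n. r j l' (Um \<omega>))"
      by (rule member_le_sum) (use jl r_nonneg in auto)
    also have "\<dots> \<le> R (Um \<omega>)" unfolding R_def
      by (rule member_le_sum[where f = "\<lambda>j. \<Sum>l'<n. r j l' (Um \<omega>)"]) (use jl r_nonneg in \<open>auto intro: sum_nonneg\<close>)
    finally show "\<epsilon>^2 \<le> R (Um \<omega>)" .
  qed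
  have "measure P {\<omega> \<in> space P. \<exists>j<n. \<exists>l<n. cmod (ent (Um \<omega>) j l) > \<epsilon>} \<le> measure P {\<omega> \<in> space P. \<epsilon>^2 \<le> R (Um \<omega>)}"
    by (rule P.finite_measure_mono[OF sub setm])
  also have "\<dots> \<le> (\<integral>\<omega>. R (Um \<omega>) \<partial>P) / \<epsilon>^2"
    by (rule integral_Markov_inequality_measure[OF RiP, where A="space P"])
       (use eps in \<open>auto simp: R_def r_nonneg intro!: sum_nonneg\<close>)
  also have "\<dots> \<le> (real n * real n * (2 * (N * K^2) / (real m)^2 + 2 * (cm - c)^2)) / \<epsilon>^2"
    unfolding RintP using Rint eps by (intro divide_right_mono) auto
  finally show ?thesis unfolding ent_def cm_def .
qed


theorem theorem4p5:
  fixes n m0 :: nat and lam :: "nat \<Rightarrow> nat \<Rightarrow> real"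
    and K C :: real and \<mu> :: "real measure"
    and P :: "'w measure" and U :: "nat \<Rightarrow> 'w \<Rightarrow> (nat \<Rightarrow> nat \<Rightarrow> complex)"
  assumes n: "n \<ge> 2" and m0: "m0 \<ge> 1"
    and P: "prob_space P"
    and U_meas: "\<And>m. m \<ge> m0 \<Longrightarrow> U m \<in> borel_measurable P"
    and U_haar: "\<And>m. m \<ge> m0 \<Longrightarrow> haar_unitary (m*n) (distr P borel (U m))"
    and supp: "\<And>m. m \<ge> m0 \<Longrightarrow> AE x in emp_measure (m*n) (lam m). -K \<le> x \<and> x \<le> K"
    and mom: "\<And>m r. m \<ge> m0 \<Longrightarrow> \<bar>moment (emp_measure (m*n) (lam m)) r\<bar> < C"
    and mu: "real_distribution \<mu>"
    and conv: "weak_conv_m (\<lambda>k. emp_measure ((k+m0)*n) (lam (k+m0))) \<mu>"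
  shows "\<forall>\<epsilon>>0. (\<lambda>m. measure P {\<omega> \<in> space P. \<exists>j<n. \<exists>l<n.
            cmod (pi2 m n (\<lambda>a b. conj_diag (m*n) (U m \<omega>) (lam m) a b / of_nat m) j l
                  - (if j = l then complex_of_real (moment \<mu> 1) else 0)) > \<epsilon>})
          \<longlonglongrightarrow> 0"
proof (intro allI impI)
  fix \<epsilon> :: real assume eps: "\<epsilon> > 0"
  define cs where "cs m = (\<Sum>p<m*n. lam m p) / real (m*n)" for m
  define c where "c = moment \<mu> 1"
  have npos: "0 < n" using n by simp
  have lamK: "\<forall>p<m*n. \<bar>lam m p\<bar> \<le> K" if "m \<ge> m0" for m
  proof -
    have "0 < m*n" using that m0 npos by simp
    from emp_supp[OF this supp[OF that]] show ?thesis by (auto simp: abs_le_iff)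
  qed
  have "(\<lambda>k. (\<Sum>p<(k+m0)*n. lam (k+m0) p) / real ((k+m0)*n)) \<longlonglongrightarrow> moment \<mu> 1"
    by (rule conv_moment[where E="\<lambda>k. emp_measure ((k+m0)*n) (lam (k+m0))" and Nk="\<lambda>k. (k+m0)*n"
          and l="\<lambda>k. lam (k+m0)" and K=K])
       (use lamK m0 npos mu conv in auto)
  then have "(\<lambda>k. cs (k + m0)) \<longlonglongrightarrow> c" unfolding cs_def c_def .
  then have cconv: "cs \<longlonglongrightarrow> c" by (rule LIMSEQ_offset)
  define b where "b m = (real n * real n * (2 * (real (m*n) * K^2) / (real m)^2 + 2 * (cs m - c)^2)) / \<epsilon>^2" for m
  have "(\<lambda>m. (real n * real n * (2 * (real n * K^2) / real m + 2 * (cs m - c)^2)) / \<epsilon>^2)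
      \<longlonglongrightarrow> (real n * real n * (0 + 2 * (c - c)^2)) / \<epsilon>^2"
    by (intro tendsto_intros cconv) (use eps in auto)
  then have b': "(\<lambda>m. (real n * real n * (2 * (real n * K^2) / real m + 2 * (cs m - c)^2)) / \<epsilon>^2) \<longlonglongrightarrow> 0"
    by simp
  have "\<forall>\<^sub>F m in sequentially. (real n * real n * (2 * (real n * K^2) / real m + 2 * (cs m - c)^2)) / \<epsilon>^2 = b m"
    using eventually_ge_at_top[of 1]
  proof eventually_elim
    case (elim m)
    have "2 * (real (m*n) * K^2) / (real m)^2 = 2 * (real n * K^2) / real m"
      using elim by (simp add: power2_eq_square field_simps)
    then show ?case unfolding b_def by simp
  qed
  with b' have blim: "b \<longlonglongrightarrow> 0" by (rule Lim_transform_eventually)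
  show "(\<lambda>m. measure P {\<omega> \<in> space P. \<exists>j<n. \<exists>l<n.
            cmod (pi2 m n (\<lambda>a b. conj_diag (m*n) (U m \<omega>) (lam m) a b / of_nat m) j l
                  - (if j = l then complex_of_real (moment \<mu> 1) else 0)) > \<epsilon>}) \<longlonglongrightarrow> 0"
  proof (rule tendsto_sandwich[OF _ _ tendsto_const blim])
    show "\<forall>\<^sub>F m in sequentially. 0 \<le> measure P {\<omega> \<in> space P. \<exists>j<n. \<exists>l<n.
            cmod (pi2 m n (\<lambda>a b. conj_diag (m*n) (U m \<omega>) (lam m) a b / of_nat m) j l
                  - (if j = l then complex_of_real (moment \<mu> 1) else 0)) > \<epsilon>}"
      by simp
    show "\<forall>\<^sub>F m in sequentially. measure P {\<omega> \<in> space P. \<exists>j<n. \<exists>l<n.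
            cmod (pi2 m n (\<lambda>a b. conj_diag (m*n) (U m \<omega>) (lam m) a b / of_nat m) j l
                  - (if j = l then complex_of_real (moment \<mu> 1) else 0)) > \<epsilon>} \<le> b m"
      using eventually_ge_at_top[of m0]
    proof eventually_elim
      case (elim m)
      have mpos: "0 < m" using elim m0 by simp
      have N2: "2 \<le> m * n" using n mpos by (metis mult_le_mono One_nat_def Suc_leI mult_1)
      show ?case
        using per_m[OF U_haar[OF elim] lamK[OF elim] refl mpos N2 eps P U_meas[OF elim], where c = c]
        unfolding b_def cs_def c_def by simp
    qed
  qed
qed

end
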